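(* Fix $T>0$ and $L>0$. For $t\in[0,T]$ and $x,y\in[-L,L]$ let $H_L^M(t;x,y)=\Gamma(t,x-y)-\Gamma_L^M(t;x,y)$. Then $$\int_{-L}^Ldy\,|H_L^M(t;x,y)|\le K_{t,x,L}\left[e^{-\frac{(L-x)^2}{4t}}+e^{-\frac{(L+x)^2}{4t}}\right],$$ $$\int_0^tds\int_{-L}^Ldy\,|H_L^M(s;x,y)|\le t\,K_{t,x,L}\left[e^{-\frac{(L-x)^2}{4t}}+e^{-\frac{(L+x)^2}{4t}}\right],$$ $$\int_0^tds\int_{-L}^Ldy\,[H_L^M(s;x,y)]^2\le\sqrt{\tfrac{t}{\pi}}\,K_{t,x,L}\left[e^{-\frac{(L-x)^2}{4t}}+e^{-\frac{(L+x)^2}{4t}}\right]^2.$$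
   Context: $\Gamma(t,x)=(4\pi t)^{-1/2}\exp(-x^2/(4t))$ for $t>0$. $\Gamma_L^M(t;x,y)=\sum_{m\in\mathbb Z}(-1)^m[\Gamma(t,x-y+4mL)-\Gamma(t,x+y+(4m+2)L)]$ (equivalently $\frac1L\sum_{n\ge0}e^{-\pi^2(2n+1)^2t/(16L^2)}\sin(\frac{(2n+1)\pi}{4L}(x+L))\sin(\frac{(2n+1)\pi}{4L}(y+L))$) is the Green's function of $\partial_t-\partial_x^2$ on $[-L,L]$ with mixed boundary conditions $u(t,-L)=0$, $\partial_xu(t,L)=0$. $K_{t,x,L}=\min\left(\frac12,\sqrt{t/\pi}\,\max\left(\frac1{L-x},\frac1{L+x}\right)\right)$. *)

theory Defs
  imports "HOL-Analysis.Analysis"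
begin

definition heat_kernel :: "real \<Rightarrow> real \<Rightarrow> real" where
  "heat_kernel t x = exp (- (x^2) / (4 * t)) / sqrt (4 * pi * t)"

text \<open>Green's function on [-L,L] with mixed boundary conditions (Dirichlet at -L, Neumann at L),
  given by the method of images as a sum over m in Z.\<close>
definition green_mixed :: "real \<Rightarrow> real \<Rightarrow> real \<Rightarrow> real \<Rightarrow> real" where
  "green_mixed L t x y =
     (\<Sum>\<^sub>\<infinity>m::int. (-1) powi m *
        (heat_kernel t (x - y + 4 * of_int m * L)
         - heat_kernel t (x + y + (4 * of_int m + 2) * L)))"

definition H_mixed :: "real \<Rightarrow> real \<Rightarrow> real \<Rightarrow> real \<Rightarrow> real" where
  "H_mixed L t x y = heat_kernel t (x - y) - green_mixed L t x y"

text \<open>K_{t,x,L} = min(1/2, sqrt(t/pi) max(1/(L-x), 1/(L+x))).  At x = L or x = -L one of the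
  reciprocals is +infinity in the paper, so K = 1/2 there (made explicit, since 1/0 = 0 in HOL).\<close>
definition K_const :: "real \<Rightarrow> real \<Rightarrow> real \<Rightarrow> real" where
  "K_const t x L =
     (if x = L \<or> x = -L then 1/2
      else min (1/2) (sqrt (t / pi) * max (1 / (L - x)) (1 / (L + x))))"

end

theory Submission
  imports Defs "HOL-Probability.Distributions"
begin

lemma hk_nonneg: "s \<ge> 0 \<Longrightarrow> 0 \<le> heat_kernel s z"
  by (simp add: heat_kernel_def)

lemma hk_even: "heat_kernel s (- z) = heat_kernel s z"
  by (simp add: heat_kernel_def)

lemma hk_alt: "s > 0 \<Longrightarrow> heat_kernel s z = heat_kernel s 0 * exp (- (z^2) / (4 * s))"
  by (simp add: heat_kernel_def)

lemma hk_mono: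
  assumes "s > 0" "\<bar>z\<bar> \<le> \<bar>w\<bar>"
  shows "heat_kernel s w \<le> heat_kernel s z"
proof -
  have "z^2 \<le> w^2" using assms(2) by (metis abs_le_square_iff)
  then have "- (w^2) / (4 * s) \<le> - (z^2) / (4 * s)" using assms(1)
    by (simp add: divide_right_mono)
  then show ?thesis using assms(1) unfolding heat_kernel_def
    by (intro divide_right_mono) auto
qed


lemma hk_geo:
  assumes s: "s > 0" and L: "L > 0" and c: "c \<ge> -2*L"
  shows "heat_kernel s (c + 4 * real i * L) \<le> heat_kernel s 0 * exp (- (L^2) / s) ^ i"
proof (cases "i = 0")
  case True
  then show ?thesis using hk_mono[OF s, of 0 c] by simp
next
  case False
  then have i1: "real i \<ge> 1" by simp
  have "L \<le> real i * L" using i1 L by simp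
  then have "c + 4 * real i * L \<ge> 2 * real i * L" using c by linarith
  moreover have "2 * real i * L \<ge> 0" using L by simp
  ultimately have "(c + 4 * real i * L)^2 \<ge> (2 * real i * L)^2"
    by (meson power_mono)
  moreover have "(2 * real i * L)^2 \<ge> 4 * real i * L^2"
  proof -
    have "(2 * real i * L)^2 = 4 * (real i * real i) * L^2" by (simp add: power2_eq_square)
    moreover have "real i * real i \<ge> real i" using i1 by (simp add: mult_le_cancel_right1)
    ultimately show ?thesis using L by (simp add: mult_right_mono)
  qed
  ultimately have sq: "(c + 4 * real i * L)^2 \<ge> 4 * real i * L^2" by linarith
  have "- ((c + 4 * real i * L)^2) / (4 * s) \<le> real i * (- (L^2) / s)"
  proof -
    have "real i * (- (L^2) / s) = - (4 * real i * L^2) / (4 * s)" using s by (simp add: field_simps)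
    moreover have "- ((c + 4 * real i * L)^2) / (4 * s) \<le> - (4 * real i * L^2) / (4 * s)"
      using sq s by (intro divide_right_mono) auto
    ultimately show ?thesis by simp
  qed
  then have "exp (- ((c + 4 * real i * L)^2) / (4 * s)) \<le> exp (- (L^2) / s) ^ i"
    by (metis exp_le_cancel_iff exp_of_nat_mult)
  then show ?thesis using hk_alt[OF s] hk_nonneg[of s 0] s
    by (metis mult_left_mono less_imp_le)
qed

lemma hk_summable:
  assumes s: "s > 0" and L: "L > 0" and c: "c \<ge> -2*L"
  shows "summable (\<lambda>i. heat_kernel s (c + 4 * real i * L))"
proof -
  have r: "norm (exp (- (L^2) / s)) < 1" using s L by simp
  show ?thesis
    apply (rule summable_comparison_test'[where N=0, OF summable_mult[OF summable_geometric[OF r], of "heat_kernel s 0"]])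
    using hk_geo[OF s L c] hk_nonneg[of s] s by (simp add: mult.commute)
qed

lemma hk_tendsto0:
  assumes s: "s > 0" and L: "L > 0" and c: "c \<ge> -2*L"
  shows "(\<lambda>i. heat_kernel s (c + 4 * real i * L)) \<longlonglongrightarrow> 0"
  using summable_LIMSEQ_zero[OF hk_summable[OF assms]] .

definition Aser :: "real \<Rightarrow> real \<Rightarrow> real \<Rightarrow> real" where
  "Aser L s c = (\<Sum>i. (-1)^i * heat_kernel s (c + 4 * real i * L))"

lemma Aser_summable:
  assumes s: "s > 0" and L: "L > 0" and c: "c \<ge> -2*L"
  shows "summable (\<lambda>i. (-1::real)^i * heat_kernel s (c + 4 * real i * L))"
    and "summable (\<lambda>i. norm ((-1::real)^i * heat_kernel s (c + 4 * real i * L)))"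
proof -
  show *: "summable (\<lambda>i. norm ((-1::real)^i * heat_kernel s (c + 4 * real i * L)))"
    using hk_summable[OF assms] hk_nonneg[of s] s
    by (simp add: abs_mult)
  show "summable (\<lambda>i. (-1::real)^i * heat_kernel s (c + 4 * real i * L))"
    using summable_norm_cancel[OF *] .
qed

lemma Aser_bounds:
  assumes s: "s > 0" and L: "L > 0" and c: "c \<ge> 0"
  shows "0 \<le> Aser L s c" "Aser L s c \<le> heat_kernel s c"
proof -
  let ?a = "\<lambda>i. heat_kernel s (c + 4 * real i * L)"
  have c2: "c \<ge> -2*L" using c L by simp
  have z: "?a \<longlonglongrightarrow> 0" by (rule hk_tendsto0[OF s L c2])
  have p: "\<And>n. 0 \<le> ?a n" using hk_nonneg s by simp
  have m: "\<And>n. ?a (Suc n) \<le> ?a n"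
    by (rule hk_mono[OF s]) (use c L in auto)
  note Lz = summable_Leibniz'[OF z p m]
  from Lz(2)[of 0] show "0 \<le> Aser L s c" by (simp add: Aser_def)
  from Lz(4)[of 0] show "Aser L s c \<le> heat_kernel s c" by (simp add: Aser_def)
qed

lemma Aser_step:
  assumes s: "s > 0" and L: "L > 0" and c: "c \<ge> -2*L"
  shows "Aser L s c = heat_kernel s c - Aser L s (c + 4 * L)"
proof -
  note sm = Aser_summable(1)[OF assms]
  have "(\<Sum>i. (-1::real)^(Suc i) * heat_kernel s (c + 4 * real (Suc i) * L))
        = Aser L s c - heat_kernel s c"
    using suminf_split_head[OF sm] by (simp add: Aser_def)
  moreover have "(\<lambda>i. (-1::real)^(Suc i) * heat_kernel s (c + 4 * real (Suc i) * L))
      = (\<lambda>i. - ((-1)^i * heat_kernel s ((c + 4 * L) + 4 * real i * L)))"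
    by (rule ext) (simp add: algebra_simps)
  moreover have "(\<Sum>i. - ((-1::real)^i * heat_kernel s ((c + 4 * L) + 4 * real i * L)))
      = - Aser L s (c + 4*L)" unfolding Aser_def
    by (rule suminf_minus[OF Aser_summable(1)[OF s L]]) (use c L in simp)
  ultimately have "- Aser L s (c + 4*L) = Aser L s c - heat_kernel s c"
    by simp
  then show ?thesis by simp
qed


lemma powi_neg_aux: "(-1::real) powi (- int i - 1) = - ((-1)^i)"
proof -
  have "- int i - 1 = - int (Suc i)" by simp
  then have "(-1::real) powi (- int i - 1) = inverse ((-1::real) powi int (Suc i))"
    by (simp only: power_int_minus)
  also have "\<dots> = inverse ((-1::real) ^ Suc i)" by (simp only: power_int_of_nat)
  also have "\<dots> = - ((-1)^i)" by (simp add: power_inverse[symmetric])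
  finally show ?thesis .
qed

lemma UNIV_int_split: "(UNIV :: int set) = range int \<union> range (\<lambda>i. - int i - 1)"
proof -
  have "m \<in> range int \<union> range (\<lambda>i. - int i - 1)" for m :: int
  proof (cases "m \<ge> 0")
    case True then have "m = int (nat m)" by simp
    then show ?thesis by blast
  next
    case False then have "m = - int (nat (- m - 1)) - 1" by simp
    then show ?thesis by blast
  qed
  then show ?thesis by blast
qed

lemma green_eq:
  assumes s: "s > 0" and L: "L > 0"
    and d1: "x - y \<ge> -2*L" and d2: "x - y \<le> 2*L"
    and e1: "x + y \<ge> -2*L" and e2: "x + y \<le> 2*L"
  shows "green_mixed L s x y = Aser L s (x - y) - Aser L s (2*L + (x + y))
           - Aser L s (4*L - (x - y)) + Aser L s (2*L - (x + y))"
proof -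
  define f where "f m = (-1::real) powi m *
        (heat_kernel s (x - y + 4 * of_int m * L)
         - heat_kernel s (x + y + (4 * of_int m + 2) * L))" for m :: int
  let ?a1 = "\<lambda>i. (-1::real)^i * heat_kernel s ((x - y) + 4 * real i * L)"
  let ?b1 = "\<lambda>i. (-1::real)^i * heat_kernel s ((2*L + (x + y)) + 4 * real i * L)"
  let ?a2 = "\<lambda>i. (-1::real)^i * heat_kernel s ((4*L - (x - y)) + 4 * real i * L)"
  let ?b2 = "\<lambda>i. (-1::real)^i * heat_kernel s ((2*L - (x + y)) + 4 * real i * L)"
  have ca1: "x - y \<ge> -2*L" "2*L + (x + y) \<ge> -2*L" "4*L - (x - y) \<ge> -2*L" "2*L - (x + y) \<ge> -2*L"
    using d1 d2 e1 e2 L by linarith+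
  note sa1 = Aser_summable[OF s L ca1(1)] and sb1 = Aser_summable[OF s L ca1(2)]
   and sa2 = Aser_summable[OF s L ca1(3)] and sb2 = Aser_summable[OF s L ca1(4)]
  have f1: "(f \<circ> int) = (\<lambda>i. ?a1 i - ?b1 i)"
    by (rule ext) (simp add: f_def power_int_of_nat algebra_simps)
  have f2: "(f \<circ> (\<lambda>i. - int i - 1)) = (\<lambda>i. ?b2 i - ?a2 i)"
  proof (rule ext)
    fix i :: nat
    have e1: "x - y + 4 * real_of_int (- int i - 1) * L = - ((4*L - (x - y)) + 4 * real i * L)"
      by (simp add: algebra_simps)
    have e2: "x + y + (4 * real_of_int (- int i - 1) + 2) * L = - ((2*L - (x + y)) + 4 * real i * L)"
      by (simp add: algebra_simps)
    show "(f \<circ> (\<lambda>i. - int i - 1)) i = ?b2 i - ?a2 i"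
      unfolding comp_def f_def powi_neg_aux e1 e2 hk_even by (simp add: algebra_simps)
  qed
  have h1: "((f \<circ> int) has_sum (Aser L s (x - y) - Aser L s (2*L + (x + y)))) UNIV"
  proof -
    have "summable (\<lambda>i. norm (?a1 i - ?b1 i))"
      by (rule summable_comparison_test'[where N=0, OF summable_add[OF sa1(2) sb1(2)]])
         (simp add: norm_triangle_ineq4)
    moreover have "(\<lambda>i. ?a1 i - ?b1 i) sums (Aser L s (x - y) - Aser L s (2*L + (x + y)))"
      unfolding Aser_def by (intro sums_diff summable_sums sa1(1) sb1(1))
    ultimately show ?thesis unfolding f1 by (rule norm_summable_imp_has_sum)
  qed
  have h2: "((f \<circ> (\<lambda>i. - int i - 1)) has_sum (Aser L s (2*L - (x + y)) - Aser L s (4*L - (x - y)))) UNIV"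
  proof -
    have "summable (\<lambda>i. norm (?b2 i - ?a2 i))"
      by (rule summable_comparison_test'[where N=0, OF summable_add[OF sb2(2) sa2(2)]])
         (simp add: norm_triangle_ineq4)
    moreover have "(\<lambda>i. ?b2 i - ?a2 i) sums (Aser L s (2*L - (x + y)) - Aser L s (4*L - (x - y)))"
      unfolding Aser_def by (intro sums_diff summable_sums sa2(1) sb2(1))
    ultimately show ?thesis unfolding f2 by (rule norm_summable_imp_has_sum)
  qed
  have inj1: "inj_on int (UNIV :: nat set)" by (simp add: inj_on_def)
  have inj2: "inj_on (\<lambda>i::nat. - int i - 1) UNIV" by (simp add: inj_on_def)
  have H1: "(f has_sum (Aser L s (x - y) - Aser L s (2*L + (x + y)))) (range int)"
    using h1 has_sum_reindex[OF inj1] by blast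
  have H2: "(f has_sum (Aser L s (2*L - (x + y)) - Aser L s (4*L - (x - y)))) (range (\<lambda>i::nat. - int i - 1))"
    using h2 has_sum_reindex[OF inj2] by blast
  have disj: "range int \<inter> range (\<lambda>i::nat. - int i - 1) = {}" by auto
  have "(f has_sum ((Aser L s (x - y) - Aser L s (2*L + (x + y))) + (Aser L s (2*L - (x + y)) - Aser L s (4*L - (x - y))))) UNIV"
    unfolding UNIV_int_split by (rule has_sum_Un_disjoint[OF H1 H2 disj])
  then have "infsum f UNIV = (Aser L s (x - y) - Aser L s (2*L + (x + y))) + (Aser L s (2*L - (x + y)) - Aser L s (4*L - (x - y)))"
    by (rule infsumI)
  then show ?thesis unfolding green_mixed_def f_def[abs_def] by simp
qed


lemma H_bounds:
  assumes s: "s > 0" and L: "L > 0"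
    and x1: "-L \<le> x" and x2: "x \<le> L" and y1: "-L \<le> y" and y2: "y \<le> L"
  shows "- heat_kernel s (2*L - (x + y)) \<le> H_mixed L s x y"
    and "H_mixed L s x y \<le> heat_kernel s (2*L + (x + y)) + heat_kernel s (4*L + (x - y))
                            + heat_kernel s (6*L - (x + y))"
proof -
  have g: "green_mixed L s x y = Aser L s (x - y) - Aser L s (2*L + (x + y))
           - Aser L s (4*L - (x - y)) + Aser L s (2*L - (x + y))"
    by (rule green_eq[OF s L]) (use x1 x2 y1 y2 in linarith)+
  have st1: "Aser L s (x - y) = heat_kernel s (x - y) - Aser L s (x - y + 4 * L)"
    by (rule Aser_step[OF s L]) (use x1 x2 y1 y2 in linarith)
  have st2: "Aser L s (2*L - (x + y)) = heat_kernel s (2*L - (x + y)) - Aser L s (2*L - (x + y) + 4 * L)"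
    by (rule Aser_step[OF s L]) (use x1 x2 y1 y2 in linarith)
  have H: "H_mixed L s x y = Aser L s (x - y + 4 * L) + Aser L s (2*L + (x + y))
           + Aser L s (4*L - (x - y)) - Aser L s (2*L - (x + y))"
    unfolding H_mixed_def g st1 by simp
  have b1: "0 \<le> Aser L s (x - y + 4 * L)" "Aser L s (x - y + 4 * L) \<le> heat_kernel s (x - y + 4 * L)"
    by (rule Aser_bounds[OF s L]; use x1 x2 y1 y2 in linarith)+
  have b2: "0 \<le> Aser L s (2*L + (x + y))" "Aser L s (2*L + (x + y)) \<le> heat_kernel s (2*L + (x + y))"
    by (rule Aser_bounds[OF s L]; use x1 x2 y1 y2 in linarith)+
  have b3: "0 \<le> Aser L s (4*L - (x - y))" "Aser L s (4*L - (x - y)) \<le> heat_kernel s (4*L - (x - y))"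
    by (rule Aser_bounds[OF s L]; use x1 x2 y1 y2 in linarith)+
  have b4: "0 \<le> Aser L s (2*L - (x + y))" "Aser L s (2*L - (x + y)) \<le> heat_kernel s (2*L - (x + y))"
    by (rule Aser_bounds[OF s L]; use x1 x2 y1 y2 in linarith)+
  have b5: "0 \<le> Aser L s (2*L - (x + y) + 4 * L)" "Aser L s (2*L - (x + y) + 4 * L) \<le> heat_kernel s (2*L - (x + y) + 4 * L)"
    by (rule Aser_bounds[OF s L]; use x1 x2 y1 y2 in linarith)+
  have m: "heat_kernel s (4*L - (x - y)) \<le> heat_kernel s (2*L - (x + y))"
    by (rule hk_mono[OF s]) (use x1 x2 y1 y2 in auto)
  show "- heat_kernel s (2*L - (x + y)) \<le> H_mixed L s x y"
    unfolding H using b1 b2 b3 b4 by linarith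
  have e: "2*L - (x + y) + 4 * L = 6*L - (x + y)" "x - y + 4 * L = 4*L + (x - y)" by simp_all
  show "H_mixed L s x y \<le> heat_kernel s (2*L + (x + y)) + heat_kernel s (4*L + (x - y))
                            + heat_kernel s (6*L - (x + y))"
    using b1 b2 b3 b5 m st2 unfolding H e by linarith
qed


lemma gauss_half:
  assumes s: "s > 0"
  shows "integrable lborel (\<lambda>v. indicator {0..} v * heat_kernel s v)"
    and "(\<integral>v. indicator {0..} v * heat_kernel s v \<partial>lborel) = 1/2"
proof -
  define f where "f x = indicator {0..} x *\<^sub>R exp (- (x::real)\<^sup>2)" for x
  define c where "c = 1 / (2 * sqrt s)"
  have c0: "c > 0" using s by (simp add: c_def)
  have g0: "has_bochner_integral lborel f (sqrt pi / 2)"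
    unfolding f_def[abs_def] by (rule gaussian_moment_0)
  have fi: "integrable lborel f" using g0 by (simp add: has_bochner_integral_iff)
  have fv: "\<integral>x. f x \<partial>lborel = sqrt pi / 2" using g0 by (simp add: has_bochner_integral_iff)
  have eq: "f (c * v) = indicator {0..} v * exp (- (v\<^sup>2) / (4 * s))" for v
  proof -
    have "(c * v)\<^sup>2 = v\<^sup>2 / (4 * s)" using s by (simp add: c_def power_mult_distrib power_divide)
    moreover have "indicator {0..} (c * v) = (indicator {0..} v :: real)"
      using c0 by (simp add: indicator_def zero_le_mult_iff)
    ultimately show ?thesis by (simp add: f_def)
  qed
  have i2: "integrable lborel (\<lambda>v. indicator {0..} v * exp (- (v\<^sup>2) / (4 * s)))"
    using lborel_integrable_real_affine[OF fi, of c 0] c0 by (simp add: eq)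
  have fe: "(\<lambda>v. f (c * v)) = (\<lambda>v. indicator {0..} v * exp (- (v\<^sup>2) / (4 * s)))"
    by (rule ext) (rule eq)
  have "(\<integral>x. f x \<partial>lborel) = c * (\<integral>v. f (c * v) \<partial>lborel)"
    using lborel_integral_real_affine[of c f 0] c0 by simp
  then have "sqrt pi / 2 = c * (\<integral>v. indicator {0..} v * exp (- (v\<^sup>2) / (4 * s)) \<partial>lborel)"
    using fv fe by simp
  then have v2: "(\<integral>v. indicator {0..} v * exp (- (v\<^sup>2) / (4 * s)) \<partial>lborel) = sqrt pi / 2 / c"
    using c0 by (simp add: field_simps)
  have hk: "indicator {0..} v * heat_kernel s v = (indicator {0..} v * exp (- (v\<^sup>2) / (4 * s))) / sqrt (4 * pi * s)" for v
    by (simp add: heat_kernel_def)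
  show "integrable lborel (\<lambda>v. indicator {0..} v * heat_kernel s v)"
    unfolding hk by (intro integrable_divide i2)
  have "(\<integral>v. indicator {0..} v * heat_kernel s v \<partial>lborel) = sqrt pi / 2 / c / sqrt (4 * pi * s)"
    unfolding hk using v2 by simp
  also have "\<dots> = 1/2" using s
    by (simp add: c_def real_sqrt_mult field_simps)
  finally show "(\<integral>v. indicator {0..} v * heat_kernel s v \<partial>lborel) = 1/2" .
qed

lemma hk_cont: "s > 0 \<Longrightarrow> continuous_on A (heat_kernel s)"
  unfolding heat_kernel_def by (intro continuous_intros) auto

lemma hk_int_half0:
  assumes s: "s > 0" and h: "h \<ge> 0"
  shows "integral {0..h} (heat_kernel s) \<le> 1/2"
proof -
  have si: "set_integrable lborel {0..h} (heat_kernel s)"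
    by (rule borel_integrable_atLeastAtMost'[OF hk_cont[OF s]])
  have "integral {0..h} (heat_kernel s) = (LINT v:{0..h}|lborel. heat_kernel s v)"
    using set_borel_integral_eq_integral(2)[OF si] by simp
  also have "\<dots> = (\<integral>v. indicator {0..h} v * heat_kernel s v \<partial>lborel)"
    by (simp add: set_lebesgue_integral_def)
  also have "\<dots> \<le> (\<integral>v. indicator {0..} v * heat_kernel s v \<partial>lborel)"
  proof (rule integral_mono)
    show "integrable lborel (\<lambda>v. indicator {0..h} v * heat_kernel s v)"
      using si by (simp add: set_integrable_def)
    show "integrable lborel (\<lambda>v. indicator {0..} v * heat_kernel s v)" by (rule gauss_half(1)[OF s])
    show "indicator {0..h} v * heat_kernel s v \<le> indicator {0..} v * heat_kernel s v" for v
      using hk_nonneg[of s v] s by (auto simp: indicator_def)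
  qed
  also have "\<dots> = 1/2" by (rule gauss_half(2)[OF s])
  finally show ?thesis .
qed

lemma hk_shift_le:
  assumes s: "s > 0" and c: "c \<ge> 0" and v: "v \<ge> 0"
  shows "heat_kernel s (c + v) \<le> exp (- (c^2) / (4 * s)) * heat_kernel s v"
proof -
  have "(c + v)^2 \<ge> c^2 + v^2" using c v by (simp add: power2_sum)
  then have "- ((c + v)^2) / (4 * s) \<le> - (c^2) / (4 * s) + - (v^2) / (4 * s)"
    using s by (simp add: field_simps)
  then have "exp (- ((c + v)^2) / (4 * s)) \<le> exp (- (c^2) / (4 * s)) * exp (- (v^2) / (4 * s))"
    by (simp add: exp_add[symmetric])
  then have "exp (- ((c + v)^2) / (4 * s)) / sqrt (4 * pi * s) \<le> (exp (- (c^2) / (4 * s)) * exp (- (v^2) / (4 * s))) / sqrt (4 * pi * s)"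
    using s by (intro divide_right_mono) auto
  then show ?thesis unfolding heat_kernel_def by simp
qed

lemma J_half:
  assumes s: "s > 0" and c: "c \<ge> 0" and h: "h \<ge> 0"
  shows "integral {c..c+h} (heat_kernel s) \<le> 1/2 * exp (- (c^2) / (4 * s))"
proof -
  have "integral {c..c+h} (heat_kernel s) = integral {0..h} (heat_kernel s \<circ> (+) c)"
    using integral_shift_Icc_real[of 0 h "heat_kernel s" c] by (simp add: add.commute)
  also have "\<dots> \<le> integral {0..h} (\<lambda>v. exp (- (c^2) / (4 * s)) * heat_kernel s v)"
  proof (rule integral_le)
    show "(heat_kernel s \<circ> (+) c) integrable_on {0..h}"
      by (intro integrable_continuous_interval continuous_on_compose continuous_intros hk_cont[OF s])
    show "(\<lambda>v. exp (- (c^2) / (4 * s)) * heat_kernel s v) integrable_on {0..h}"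
      by (intro integrable_continuous_interval continuous_intros hk_cont[OF s])
    show "(heat_kernel s \<circ> (+) c) v \<le> exp (- (c^2) / (4 * s)) * heat_kernel s v" if "v \<in> {0..h}" for v
      using hk_shift_le[OF s c, of v] that by simp
  qed
  also have "\<dots> = exp (- (c^2) / (4 * s)) * integral {0..h} (heat_kernel s)"
    by simp
  also have "\<dots> \<le> exp (- (c^2) / (4 * s)) * (1/2)"
    by (intro mult_left_mono hk_int_half0[OF s h]) simp
  finally show ?thesis by simp
qed

lemma J_mills:
  assumes s: "s > 0" and c: "c > 0" and h: "h \<ge> 0"
  shows "integral {c..c+h} (heat_kernel s) \<le> sqrt (s / pi) / c * exp (- (c^2) / (4 * s))"
proof -
  define F where "F z = - 2 * s * heat_kernel s z" for z
  have der: "(F has_vector_derivative (z * heat_kernel s z)) (at z within {c..c+h})" for z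
  proof -
    have "(F has_real_derivative (z * heat_kernel s z)) (at z)"
      unfolding F_def heat_kernel_def
      by (rule derivative_eq_intros refl | use s in \<open>simp add: field_simps\<close>)+
    then show ?thesis by (simp add: has_real_derivative_iff_has_vector_derivative has_vector_derivative_at_within)
  qed
  have ftc: "((\<lambda>z. z * heat_kernel s z) has_integral (F (c+h) - F c)) {c..c+h}"
    by (rule fundamental_theorem_of_calculus) (use h der in auto)
  have "integral {c..c+h} (heat_kernel s) \<le> integral {c..c+h} (\<lambda>z. (1/c) * (z * heat_kernel s z))"
  proof (rule integral_le)
    show "heat_kernel s integrable_on {c..c+h}" by (intro integrable_continuous_interval hk_cont[OF s])
    show "(\<lambda>z. (1/c) * (z * heat_kernel s z)) integrable_on {c..c+h}"
      by (intro integrable_continuous_interval continuous_intros hk_cont[OF s])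
    show "heat_kernel s z \<le> (1/c) * (z * heat_kernel s z)" if "z \<in> {c..c+h}" for z
    proof -
      have "1 \<le> z / c" using that c by simp
      then have "1 * heat_kernel s z \<le> (z / c) * heat_kernel s z"
        using hk_nonneg[of s z] s by (intro mult_right_mono) auto
      then show ?thesis by simp
    qed
  qed
  also have "\<dots> = (1/c) * (F (c+h) - F c)"
    using integral_unique[OF ftc] by simp
  also have "\<dots> \<le> (1/c) * (2 * s * heat_kernel s c)"
    using hk_nonneg[of s "c+h"] s c by (simp add: F_def divide_right_mono)
  also have "\<dots> = sqrt (s / pi) / c * exp (- (c^2) / (4 * s))"
  proof -
    have e1: "2 * s / sqrt (4 * pi * s) = sqrt (s / pi)"
      using s by (simp add: real_sqrt_mult real_sqrt_divide field_simps)
    have "2 * s * heat_kernel s c = (2 * s / sqrt (4 * pi * s)) * exp (- (c^2) / (4 * s))"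
      by (simp add: heat_kernel_def)
    then show ?thesis unfolding e1 by simp
  qed
  finally show ?thesis .
qed


lemma int_shift_plus:
  "integral {-L..L} (\<lambda>y. heat_kernel s (p + y)) = integral {p-L..p+L} (heat_kernel s)"
  using integral_shift_Icc_real[of "-L" L "heat_kernel s" p] by (simp add: comp_def add.commute)

lemma int_shift_minus:
  "integral {-L..L} (\<lambda>y. heat_kernel s (p - y)) = integral {p-L..p+L} (heat_kernel s)"
proof -
  have "integral {-L..L} (\<lambda>y. heat_kernel s (p - y)) = integral {-L..L} (\<lambda>y. (\<lambda>z. heat_kernel s (p + z)) (-y))"
    by simp
  also have "\<dots> = integral {-L..L} (\<lambda>z. heat_kernel s (p + z))"
    using Henstock_Kurzweil_Integration.integral_reflect_real[where a="-L" and b=L and f="\<lambda>z. heat_kernel s (p + z)"]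
    by (simp only: minus_minus)
  also have "\<dots> = integral {p-L..p+L} (heat_kernel s)" by (rule int_shift_plus)
  finally show ?thesis .
qed

lemma hk_comp_cont: "s > 0 \<Longrightarrow> continuous_on A g \<Longrightarrow> continuous_on A (\<lambda>y. heat_kernel s (g y))"
  by (rule continuous_on_compose2[OF hk_cont[where A=UNIV]]) auto

lemma J_K:
  assumes s: "s > 0" and L: "L > 0" and x1: "-L \<le> x" and x2: "x \<le> L"
    and c: "c = L - x \<or> c = L + x" and h: "h \<ge> 0"
  shows "integral {c..c+h} (heat_kernel s) \<le> K_const s x L * exp (- (c^2) / (4 * s))"
proof (cases "x = L \<or> x = -L")
  case True
  then show ?thesis using J_half[OF s _ h, of c] c x1 x2 by (auto simp: K_const_def)
next
  case False
  then have a: "L - x > 0" and b: "L + x > 0" using x1 x2 by auto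
  have c0: "c > 0" using c a b by auto
  have K: "K_const s x L = min (1/2) (sqrt (s / pi) * max (1 / (L - x)) (1 / (L + x)))"
    using False by (simp add: K_const_def)
  have "sqrt (s / pi) / c \<le> sqrt (s / pi) * max (1 / (L - x)) (1 / (L + x))"
    using c s by (auto simp: divide_inverse intro!: mult_left_mono)
  then have "min (1/2) (sqrt (s / pi) / c) \<le> K_const s x L"
    unfolding K by linarith
  moreover have "integral {c..c+h} (heat_kernel s) \<le> min (1/2) (sqrt (s / pi) / c) * exp (- (c^2) / (4 * s))"
    using J_half[OF s _ h, of c] J_mills[OF s c0 h] c0 by (simp add: min_mult_distrib_right)
  moreover have "min (1/2) (sqrt (s / pi) / c) * exp (- (c^2) / (4 * s)) \<le> K_const s x L * exp (- (c^2) / (4 * s))"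
    by (rule mult_right_mono) (use calculation in auto)
  ultimately show ?thesis by linarith
qed

lemma K_nonneg:
  assumes "s \<ge> 0" "-L \<le> x" "x \<le> L"
  shows "K_const s x L \<ge> 0"
proof (cases "x = L \<or> x = -L")
  case True then show ?thesis by (simp add: K_const_def)
next
  case False
  then have "L - x > 0" "L + x > 0" using assms by auto
  then have "max (1 / (L - x)) (1 / (L + x)) \<ge> 0" by (simp add: le_max_iff_disj)
  then have "sqrt (s / pi) * max (1 / (L - x)) (1 / (L + x)) \<ge> 0"
    using assms(1) by simp
  then show ?thesis using False by (simp add: K_const_def)
qed

definition Sb :: "real \<Rightarrow> real \<Rightarrow> real \<Rightarrow> real \<Rightarrow> real" where
  "Sb L s x y = heat_kernel s (2*L - (x + y)) + heat_kernel s (2*L + (x + y))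
      + heat_kernel s (4*L + (x - y)) + heat_kernel s (6*L - (x + y))"

lemma Sb_cont: "s > 0 \<Longrightarrow> continuous_on A (Sb L s x)"
  unfolding Sb_def by (intro continuous_on_add hk_comp_cont continuous_on_diff continuous_on_const continuous_on_id)

lemma abs_H_le_Sb:
  assumes s: "s > 0" and L: "L > 0"
    and x1: "-L \<le> x" and x2: "x \<le> L" and y1: "-L \<le> y" and y2: "y \<le> L"
  shows "\<bar>H_mixed L s x y\<bar> \<le> Sb L s x y"
  using H_bounds[OF assms] hk_nonneg[of s "2*L - (x + y)"] hk_nonneg[of s "2*L + (x + y)"]
    hk_nonneg[of s "4*L + (x - y)"] hk_nonneg[of s "6*L - (x + y)"] s unfolding Sb_def
  by (simp add: abs_le_iff)

lemma int_Sb: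
  assumes s: "s > 0" and L: "L > 0" and x1: "-L \<le> x" and x2: "x \<le> L"
  shows "integral {-L..L} (Sb L s x) \<le>
     K_const s x L * (exp (- ((L - x)^2) / (4 * s)) + exp (- ((L + x)^2) / (4 * s)))"
proof -
  have ic1: "(\<lambda>y. heat_kernel s (p + y)) integrable_on {-L..L}" for p
    by (rule integrable_continuous_interval, rule continuous_on_compose2[OF hk_cont[OF s], where f="\<lambda>y. p + y"]) (auto intro!: continuous_intros)
  have ic2: "(\<lambda>y. heat_kernel s (p - y)) integrable_on {-L..L}" for p
    by (rule integrable_continuous_interval, rule continuous_on_compose2[OF hk_cont[OF s], where f="\<lambda>y. p - y"]) (auto intro!: continuous_intros)
  have cf1: "continuous_on A (\<lambda>y. heat_kernel s (p + y))" for A p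
    by (rule continuous_on_compose2[OF hk_cont[OF s], where f="\<lambda>y. p + y"]) (auto intro!: continuous_intros)
  have cf2: "continuous_on A (\<lambda>y. heat_kernel s (p - y))" for A p
    by (rule continuous_on_compose2[OF hk_cont[OF s], where f="\<lambda>y. p - y"]) (auto intro!: continuous_intros)
  have "integral {-L..L} (Sb L s x) =
      integral {-L..L} (\<lambda>y. heat_kernel s ((2*L - x) - y)) + integral {-L..L} (\<lambda>y. heat_kernel s ((2*L + x) + y))
      + integral {-L..L} (\<lambda>y. heat_kernel s ((4*L + x) - y)) + integral {-L..L} (\<lambda>y. heat_kernel s ((6*L - x) - y))"
  proof -
    have e: "Sb L s x = (\<lambda>y. heat_kernel s ((2*L - x) - y) + heat_kernel s ((2*L + x) + y) + heat_kernel s ((4*L + x) - y) + heat_kernel s ((6*L - x) - y))"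
      by (rule ext) (simp add: Sb_def algebra_simps)
    show ?thesis unfolding e
      by (simp add: integral_add ic1 ic2 integrable_add)
  qed
  also have "\<dots> = integral {(L - x)..(L - x) + 2*L} (heat_kernel s) + integral {(L + x)..(L + x) + 2*L} (heat_kernel s)
      + integral {(L + x) + 2*L..(L + x) + 2*L + 2*L} (heat_kernel s) + integral {(L - x) + 4*L..(L - x) + 4*L + 2*L} (heat_kernel s)"
    unfolding int_shift_plus int_shift_minus by (simp add: algebra_simps)
  also have "\<dots> \<le> integral {(L - x)..(L - x) + 6*L} (heat_kernel s) + integral {(L + x)..(L + x) + 4*L} (heat_kernel s)"
  proof -
    have ii: "heat_kernel s integrable_on {p..q}" for p q by (intro integrable_continuous_interval hk_cont[OF s])
    have A: "integral {(L - x)..(L - x) + 2*L} (heat_kernel s) + integral {(L - x) + 2*L..(L - x) + 4*L} (heat_kernel s)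
             = integral {(L - x)..(L - x) + 4*L} (heat_kernel s)"
      by (rule Henstock_Kurzweil_Integration.integral_combine) (use L ii in auto)
    have B: "integral {(L - x)..(L - x) + 4*L} (heat_kernel s) + integral {(L - x) + 4*L..(L - x) + 6*L} (heat_kernel s)
             = integral {(L - x)..(L - x) + 6*L} (heat_kernel s)"
      by (rule Henstock_Kurzweil_Integration.integral_combine) (use L ii in auto)
    have C: "integral {(L + x)..(L + x) + 2*L} (heat_kernel s) + integral {(L + x) + 2*L..(L + x) + 4*L} (heat_kernel s)
             = integral {(L + x)..(L + x) + 4*L} (heat_kernel s)"
      by (rule Henstock_Kurzweil_Integration.integral_combine) (use L ii in auto)
    have D: "0 \<le> integral {(L - x) + 2*L..(L - x) + 4*L} (heat_kernel s)"
      by (rule integral_nonneg[OF ii]) (use hk_nonneg s in auto)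
    show ?thesis using A B C D by (simp add: algebra_simps)
  qed
  also have "\<dots> \<le> K_const s x L * exp (- ((L - x)^2) / (4 * s)) + K_const s x L * exp (- ((L + x)^2) / (4 * s))"
    by (intro add_mono J_K[OF s L x1 x2]) (use L in auto)
  finally show ?thesis by (simp add: algebra_simps)
qed

lemma part1:
  assumes s: "s > 0" and L: "L > 0" and x1: "-L \<le> x" and x2: "x \<le> L"
  shows "(LINT y:{-L..L}|lborel. \<bar>H_mixed L s x y\<bar>) \<le>
     K_const s x L * (exp (- ((L - x)^2) / (4 * s)) + exp (- ((L + x)^2) / (4 * s)))"
proof (cases "set_integrable lborel {-L..L} (\<lambda>y. \<bar>H_mixed L s x y\<bar>)")
  case True
  have si: "set_integrable lborel {-L..L} (Sb L s x)"
    by (rule borel_integrable_atLeastAtMost'[OF Sb_cont[OF s]])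
  have "(LINT y:{-L..L}|lborel. \<bar>H_mixed L s x y\<bar>) \<le> (LINT y:{-L..L}|lborel. Sb L s x y)"
    by (rule set_integral_mono[OF True si]) (rule abs_H_le_Sb[OF s L x1 x2]; simp)
  also have "\<dots> = integral {-L..L} (Sb L s x)"
    by (rule set_borel_integral_eq_integral(2)[OF si])
  also have "\<dots> \<le> K_const s x L * (exp (- ((L - x)^2) / (4 * s)) + exp (- ((L + x)^2) / (4 * s)))"
    by (rule int_Sb[OF assms])
  finally show ?thesis .
next
  case False
  have "K_const s x L \<ge> 0" by (rule K_nonneg) (use s x1 x2 in auto)
  moreover have "(LINT y:{-L..L}|lborel. \<bar>H_mixed L s x y\<bar>) = 0"
    using False unfolding set_lebesgue_integral_def set_integrable_def
    by (rule not_integrable_integral_eq)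
  ultimately show ?thesis by simp
qed


lemma H_zero: "H_mixed L 0 x y = 0"
  by (simp add: H_mixed_def green_mixed_def heat_kernel_def)

definition Ef :: "real \<Rightarrow> real \<Rightarrow> real \<Rightarrow> real" where
  "Ef L x s = exp (- ((L - x)^2) / (4 * s)) + exp (- ((L + x)^2) / (4 * s))"

lemma Ef_nonneg: "Ef L x s \<ge> 0"
  by (simp add: Ef_def add_nonneg_nonneg)

lemma exp_mono_s:
  fixes s t c :: real
  assumes "0 < s" "s \<le> t"
  shows "exp (- (c^2) / (4 * s)) \<le> exp (- (c^2) / (4 * t))"
proof -
  have "c^2 / (4 * t) \<le> c^2 / (4 * s)"
    using assms by (intro divide_left_mono) auto
  then show ?thesis by simp
qed

lemma Ef_mono: "0 < s \<Longrightarrow> s \<le> t \<Longrightarrow> Ef L x s \<le> Ef L x t"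
  unfolding Ef_def by (intro add_mono exp_mono_s)

lemma K_mono:
  assumes "0 < s" "s \<le> t" "-L \<le> x" "x \<le> L"
  shows "K_const s x L \<le> K_const t x L"
proof (cases "x = L \<or> x = -L")
  case True then show ?thesis by (simp add: K_const_def)
next
  case False
  then have "L - x > 0" "L + x > 0" using assms by auto
  then have m: "max (1 / (L - x)) (1 / (L + x)) \<ge> 0" by (simp add: le_max_iff_disj)
  have "sqrt (s / pi) \<le> sqrt (t / pi)" using assms by (simp add: divide_right_mono)
  then have "sqrt (s / pi) * max (1 / (L - x)) (1 / (L + x)) \<le> sqrt (t / pi) * max (1 / (L - x)) (1 / (L + x))"
    using m by (rule mult_right_mono)
  then have "min (1/2) (sqrt (s / pi) * max (1 / (L - x)) (1 / (L + x))) \<le> min (1/2) (sqrt (t / pi) * max (1 / (L - x)) (1 / (L + x)))"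
    by (rule min.mono[OF order_refl])
  then show ?thesis using False by (simp only: K_const_def if_False)
qed

lemma KE_mono:
  assumes "0 < s" "s \<le> t" "-L \<le> x" "x \<le> L"
  shows "K_const s x L * Ef L x s \<le> K_const t x L * Ef L x t"
  by (intro mult_mono K_mono Ef_mono K_nonneg Ef_nonneg) (use assms in auto)

lemma part2:
  assumes L: "L > 0" and t: "t > 0" and x1: "-L \<le> x" and x2: "x \<le> L"
  shows "(LINT s:{0..t}|lborel. (LINT y:{-L..L}|lborel. \<bar>H_mixed L s x y\<bar>))
           \<le> t * K_const t x L * Ef L x t"
proof -
  let ?F = "\<lambda>s. (LINT y:{-L..L}|lborel. \<bar>H_mixed L s x y\<bar>)"
  let ?c = "K_const t x L * Ef L x t"
  have c0: "?c \<ge> 0" by (intro mult_nonneg_nonneg K_nonneg Ef_nonneg) (use t x1 x2 in auto)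
  have bnd: "?F s \<le> ?c" if "s \<in> {0..t}" for s
  proof (cases "s = 0")
    case True then show ?thesis using c0 by (simp add: H_zero)
  next
    case False
    then have s: "s > 0" using that by auto
    have "?F s \<le> K_const s x L * Ef L x s"
      using part1[OF s L x1 x2] by (simp add: Ef_def)
    also have "\<dots> \<le> ?c" by (rule KE_mono) (use s that x1 x2 in auto)
    finally show ?thesis .
  qed
  show ?thesis
  proof (cases "set_integrable lborel {0..t} ?F")
    case True
    have ci: "set_integrable lborel {0..t} (\<lambda>s. ?c)"
      by (rule borel_integrable_atLeastAtMost') (rule continuous_on_const)
    have "(LINT s:{0..t}|lborel. ?F s) \<le> (LINT s:{0..t}|lborel. ?c)"
      by (rule set_integral_mono[OF True ci bnd])
    also have "\<dots> = t * ?c"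
      using t by (simp add: set_integral_const)
    finally show ?thesis by (simp add: mult.assoc)
  next
    case False
    then have "(LINT s:{0..t}|lborel. ?F s) = 0"
      unfolding set_lebesgue_integral_def set_integrable_def by (rule not_integrable_integral_eq)
    then show ?thesis using c0 t by (simp add: mult.assoc)
  qed
qed


lemma exp_ge_pow: "0 \<le> x \<Longrightarrow> n > 0 \<Longrightarrow> (1 + x / real n) ^ n \<le> exp x"
  by (rule exp_ge_one_plus_x_over_n_power_n) auto

lemma regime1_num:
  fixes u :: real
  assumes u: "u \<ge> 2/5"
  shows "exp (- 4 * u) \<le> u * exp (- u)"
proof -
  have "(1 + 3 * u / real 3) ^ 3 \<le> exp (3 * u)" by (rule exp_ge_pow) (use u in auto)
  then have e3: "(1 + u) ^ 3 \<le> exp (3 * u)" by simp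
  have "(7/5::real) ^ 3 \<le> (1 + u) ^ 3" by (rule power_mono) (use u in auto)
  then have "u * (7/5) ^ 3 \<le> u * (1 + u) ^ 3" using u by (intro mult_left_mono) auto
  moreover have "1 \<le> (2/5::real) * (7/5) ^ 3" by (simp add: power_divide)
  moreover have "(2/5::real) * (7/5) ^ 3 \<le> u * (7/5) ^ 3" using u by (intro mult_right_mono) auto
  moreover have "u * (1 + u) ^ 3 \<le> u * exp (3 * u)" using e3 u by (intro mult_left_mono) auto
  ultimately have "1 \<le> u * exp (3 * u)" by linarith
  then have "exp (- 4 * u) * 1 \<le> exp (- 4 * u) * (u * exp (3 * u))" by (intro mult_left_mono) auto
  also have "\<dots> = u * (exp (- 4 * u) * exp (3 * u))" by (simp add: ac_simps)
  also have "exp (- 4 * u) * exp (3 * u) = exp (- u)" by (simp add: mult_exp_exp)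
  finally have "exp (- 4 * u) * 1 \<le> u * exp (- u)" by simp
  then show ?thesis by simp
qed

lemma regime2_piece:
  fixes u l h :: real
  assumes lu: "l \<le> u" and uh: "u \<le> h" and l0: "0 \<le> l" and h1: "h \<le> 1"
    and num: "4 * h * (1 + 1 / ((1 + l / 2) ^ 8 * (2 - h))) ^ 4 \<le> 3"
  shows "4 * u * (1 + exp (- 4 * u) / (1 + exp (- u))) ^ 4 \<le> 3"
proof -
  have "(1 + 4 * l / real 8) ^ 8 \<le> exp (4 * l)" by (rule exp_ge_pow) (use l0 in auto)
  then have e8: "(1 + l / 2) ^ 8 \<le> exp (4 * l)" by simp
  have pos8: "(1 + l / 2) ^ 8 > 0" using l0 by simp
  have w: "exp (- 4 * u) \<le> 1 / (1 + l / 2) ^ 8"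
  proof -
    have "exp (- 4 * u) \<le> exp (- 4 * l)" using lu by simp
    also have "\<dots> = 1 / exp (4 * l)" by (simp add: exp_minus field_simps)
    also have "\<dots> \<le> 1 / (1 + l / 2) ^ 8" using e8 pos8 by (intro divide_left_mono) auto
    finally show ?thesis .
  qed
  have p: "2 - h \<le> 1 + exp (- u)"
  proof -
    have "1 + (- u) \<le> exp (- u)" by (rule exp_ge_add_one_self)
    then show ?thesis using uh by linarith
  qed
  have h2: "2 - h > 0" using h1 by simp
  have r: "exp (- 4 * u) / (1 + exp (- u)) \<le> 1 / ((1 + l / 2) ^ 8 * (2 - h))"
  proof -
    have "exp (- 4 * u) / (1 + exp (- u)) \<le> (1 / (1 + l / 2) ^ 8) / (2 - h)"
      using w p h2 by (intro frac_le) auto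
    then show ?thesis by simp
  qed
  have D: "(1 + exp (- 4 * u) / (1 + exp (- u))) ^ 4 \<le> (1 + 1 / ((1 + l / 2) ^ 8 * (2 - h))) ^ 4"
    by (rule power_mono) (use r in \<open>auto intro!: add_nonneg_nonneg divide_nonneg_nonneg\<close>)
  have u0: "0 \<le> u" using lu l0 by simp
  have "4 * u * (1 + exp (- 4 * u) / (1 + exp (- u))) ^ 4 \<le> 4 * h * (1 + 1 / ((1 + l / 2) ^ 8 * (2 - h))) ^ 4"
    by (rule mult_mono) (use D uh u0 in auto)
  then show ?thesis using num by linarith
qed

lemma regime2_num:
  fixes u :: real
  assumes u0: "0 \<le> u" and u1: "u \<le> 2/5"
  shows "4 * u * (1 + exp (- 4 * u) / (1 + exp (- u))) ^ 4 \<le> 3"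
proof -
  consider "u \<le> 1/10" | "1/10 \<le> u" "u \<le> 2/10" | "2/10 \<le> u" "u \<le> 1/4" | "1/4 \<le> u" "u \<le> 3/10"
    | "3/10 \<le> u" "u \<le> 7/20" | "7/20 \<le> u" "u \<le> 3/8" | "3/8 \<le> u" "u \<le> 2/5"
    using u1 by linarith
  then show ?thesis
  proof cases
    case 1 then show ?thesis by (intro regime2_piece[where l=0 and h="1/10"]) (use u0 in \<open>auto simp: power_divide\<close>)
  next
    case 2 then show ?thesis by (intro regime2_piece[where l="1/10" and h="2/10"]) (auto simp: power_divide)
  next
    case 3 then show ?thesis by (intro regime2_piece[where l="2/10" and h="1/4"]) (auto simp: power_divide)
  next
    case 4 then show ?thesis by (intro regime2_piece[where l="1/4" and h="3/10"]) (auto simp: power_divide)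
  next
    case 5 then show ?thesis by (intro regime2_piece[where l="3/10" and h="7/20"]) (auto simp: power_divide)
  next
    case 6 then show ?thesis by (intro regime2_piece[where l="7/20" and h="3/8"]) (auto simp: power_divide)
  next
    case 7 then show ?thesis by (intro regime2_piece[where l="3/8" and h="2/5"]) (auto simp: power_divide)
  qed
qed


lemma H_sup:
  assumes s: "s > 0" and L: "L > 0"
    and x1: "-L \<le> x" and x2: "x \<le> L" and y1: "-L \<le> y" and y2: "y \<le> L"
  shows "\<bar>H_mixed L s x y\<bar> \<le> heat_kernel s 0 * max (exp (- ((L - x)^2) / (4 * s)))
     (exp (- ((L + x)^2) / (4 * s)) + exp (- ((3*L + x)^2) / (4 * s)) + exp (- ((5*L - x)^2) / (4 * s)))"
proof -
  note hb = H_bounds[OF assms]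
  have m1: "heat_kernel s (2*L - (x + y)) \<le> heat_kernel s (L - x)"
    by (rule hk_mono[OF s]) (use x1 x2 y1 y2 in auto)
  have m2: "heat_kernel s (2*L + (x + y)) \<le> heat_kernel s (L + x)"
    by (rule hk_mono[OF s]) (use x1 x2 y1 y2 in auto)
  have m3: "heat_kernel s (4*L + (x - y)) \<le> heat_kernel s (3*L + x)"
    by (rule hk_mono[OF s]) (use x1 x2 y1 y2 in auto)
  have m4: "heat_kernel s (6*L - (x + y)) \<le> heat_kernel s (5*L - x)"
    by (rule hk_mono[OF s]) (use x1 x2 y1 y2 in auto)
  have "\<bar>H_mixed L s x y\<bar> \<le> max (heat_kernel s (L - x))
      (heat_kernel s (L + x) + heat_kernel s (3*L + x) + heat_kernel s (5*L - x))"
  proof (cases "H_mixed L s x y \<ge> 0")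
    case True
    then show ?thesis using hb(2) m2 m3 m4 by (simp add: le_max_iff_disj)
  next
    case False
    then show ?thesis using hb(1) m1 by (simp add: le_max_iff_disj)
  qed
  also have "\<dots> = heat_kernel s 0 * max (exp (- ((L - x)^2) / (4 * s)))
     (exp (- ((L + x)^2) / (4 * s)) + exp (- ((3*L + x)^2) / (4 * s)) + exp (- ((5*L - x)^2) / (4 * s)))"
    using hk_nonneg[of s 0] s
    by (simp add: hk_alt[OF s, of "L - x"] hk_alt[OF s, of "L + x"] hk_alt[OF s, of "3*L + x"]
        hk_alt[OF s, of "5*L - x"] max_mult_distrib_left distrib_left)
  finally show ?thesis .
qed

definition Ed :: "real \<Rightarrow> real \<Rightarrow> real \<Rightarrow> real" where
  "Ed L x s = ((L - x)^2 / (4 * s^2)) * exp (- ((L - x)^2) / (4 * s))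
            + ((L + x)^2 / (4 * s^2)) * exp (- ((L + x)^2) / (4 * s))"

definition dphi :: "real \<Rightarrow> real \<Rightarrow> real \<Rightarrow> real" where
  "dphi L x s = (1 / (2 * sqrt (pi * s))) * (Ef L x s)^2 + 2 * sqrt (s / pi) * Ef L x s * Ed L x s"

lemma Ed_nonneg: "s \<ge> 0 \<Longrightarrow> Ed L x s \<ge> 0"
  unfolding Ed_def by (intro add_nonneg_nonneg mult_nonneg_nonneg) auto

lemma dphi_nonneg: "s \<ge> 0 \<Longrightarrow> dphi L x s \<ge> 0"
  unfolding dphi_def by (intro add_nonneg_nonneg mult_nonneg_nonneg Ef_nonneg Ed_nonneg) auto

lemma Q_id: "s > 0 \<Longrightarrow> 1 / (2 * sqrt (pi * s)) = heat_kernel s 0"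
  by (simp add: heat_kernel_def real_sqrt_mult)

lemma Q_id2: "s > 0 \<Longrightarrow> 2 * sqrt (s / pi) = 4 * s * heat_kernel s 0"
proof -
  assume s: "s > 0"
  have "sqrt (s / pi) * sqrt (pi * s) = s"
    using s by (simp add: real_sqrt_mult[symmetric] real_sqrt_divide[symmetric])
  then have "sqrt (s / pi) = s / sqrt (pi * s)" using s by (simp add: field_simps)
  then show ?thesis by (simp add: heat_kernel_def real_sqrt_mult field_simps)
qed

lemma K_half:
  assumes s: "s \<ge> L^2" and L: "L > 0" and x1: "-L \<le> x" and x2: "x \<le> L"
  shows "K_const s x L = 1/2"
proof (cases "x = L \<or> x = -L")
  case True then show ?thesis by (simp add: K_const_def)
next
  case False
  then have a: "L - x > 0" and b: "L + x > 0" using x1 x2 by auto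
  have mx: "max (1 / (L - x)) (1 / (L + x)) \<ge> 1 / L"
  proof (cases "x \<le> 0")
    case True
    then have "1 / L \<le> 1 / (L + x)" using b by (intro divide_left_mono) auto
    then show ?thesis by (simp add: le_max_iff_disj)
  next
    case False
    then have "1 / L \<le> 1 / (L - x)" using a by (intro divide_left_mono) auto
    then show ?thesis by (simp add: le_max_iff_disj)
  qed
  have "L^2 / 4 \<le> s / pi"
  proof -
    have "pi * L^2 \<le> 4 * L^2" using pi_less_4 by (intro mult_right_mono) auto
    also have "\<dots> \<le> 4 * s" using s by simp
    finally show ?thesis by (simp add: field_simps)
  qed
  then have "sqrt (L^2 / 4) \<le> sqrt (s / pi)" by (rule real_sqrt_le_mono)
  then have sq: "L / 2 \<le> sqrt (s / pi)" using L by (simp add: real_sqrt_divide)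
  have "1/2 = (L / 2) * (1 / L)" using L by simp
  also have "\<dots> \<le> sqrt (s / pi) * max (1 / (L - x)) (1 / (L + x))"
  proof (rule mult_mono[OF sq mx])
    have "0 \<le> s" using s zero_le_power2[of L] by linarith
    then show "0 \<le> sqrt (s / pi)" by simp
    show "0 \<le> 1 / L" using L by simp
  qed
  finally have "1/2 \<le> sqrt (s / pi) * max (1 / (L - x)) (1 / (L + x))" .
  then show ?thesis using False by (simp add: K_const_def)
qed

lemma set_integrable_absH:
  assumes s: "s > 0" and L: "L > 0" and x1: "-L \<le> x" and x2: "x \<le> L"
    and hi: "set_integrable lborel {-L..L} (\<lambda>y. (H_mixed L s x y)^2)"
  shows "set_integrable lborel {-L..L} (\<lambda>y. \<bar>H_mixed L s x y\<bar>)"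
proof (rule set_integrable_bound[OF borel_integrable_atLeastAtMost'[OF Sb_cont[OF s]]])
  have m: "(\<lambda>y. indicator {-L..L} y *\<^sub>R (H_mixed L s x y)^2) \<in> borel_measurable lborel"
    using hi unfolding set_integrable_def by (rule borel_measurable_integrable)
  have e: "(\<lambda>y. indicator {-L..L} y *\<^sub>R \<bar>H_mixed L s x y\<bar>) = (\<lambda>y. sqrt (indicator {-L..L} y *\<^sub>R (H_mixed L s x y)^2))"
    by (rule ext) (simp add: indicator_def)
  show "set_borel_measurable lborel {-L..L} (\<lambda>y. \<bar>H_mixed L s x y\<bar>)"
    unfolding set_borel_measurable_def e by (rule measurable_compose[OF m borel_measurable_sqrt])
  show "AE y in lborel. y \<in> {-L..L} \<longrightarrow> norm \<bar>H_mixed L s x y\<bar> \<le> norm (Sb L s x y)"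
  proof (rule AE_I2, rule impI)
    fix y assume y: "y \<in> {-L..L}"
    have "\<bar>H_mixed L s x y\<bar> \<le> Sb L s x y" by (rule abs_H_le_Sb) (use s L x1 x2 y in auto)
    then show "norm \<bar>H_mixed L s x y\<bar> \<le> norm (Sb L s x y)" by simp
  qed
qed


lemma C3:
  assumes s: "s > 0" and L: "L > 0" and x1: "-L \<le> x" and x2: "x \<le> L"
  shows "(LINT y:{-L..L}|lborel. (H_mixed L s x y)^2) \<le> K_const s x L * dphi L x s"
proof -
  define Q where "Q = heat_kernel s 0"
  define \<alpha> where "\<alpha> = exp (- ((L - x)^2) / (4 * s))"
  define \<beta> where "\<beta> = exp (- ((L + x)^2) / (4 * s))"
  define \<gamma> where "\<gamma> = exp (- ((3*L + x)^2) / (4 * s))"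
  define \<epsilon> where "\<epsilon> = exp (- ((5*L - x)^2) / (4 * s))"
  define u where "u = L^2 / s"
  have Q0: "Q > 0" using s by (simp add: Q_def heat_kernel_def)
  have u0: "u > 0" using s L by (simp add: u_def)
  have a0: "\<alpha> > 0" "\<beta> > 0" "\<gamma> > 0" "\<epsilon> > 0" by (simp_all add: \<alpha>_def \<beta>_def \<gamma>_def \<epsilon>_def)
  have Efe: "Ef L x s = \<alpha> + \<beta>" by (simp add: Ef_def \<alpha>_def \<beta>_def)
  have dphie: "dphi L x s = Q * (\<alpha> + \<beta>)^2 + Q * (\<alpha> + \<beta>) * (4 * s * Ed L x s)"
    unfolding dphi_def Efe using Q_id[OF s] Q_id2[OF s] by (simp add: Q_def algebra_simps)
  have Ed4: "4 * s * Ed L x s = ((L - x)^2 / s) * \<alpha> + ((L + x)^2 / s) * \<beta>"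
    using s by (simp add: Ed_def \<alpha>_def \<beta>_def power2_eq_square field_simps)
  have K0: "K_const s x L \<ge> 0" by (rule K_nonneg) (use s x1 x2 in auto)
  have dphi0: "dphi L x s \<ge> 0" by (rule dphi_nonneg) (use s in auto)
  have Hs: "\<bar>H_mixed L s x y\<bar> \<le> Q * max \<alpha> (\<beta> + \<gamma> + \<epsilon>)" if "y \<in> {-L..L}" for y
    using H_sup[OF s L x1 x2, of y] that by (simp add: Q_def \<alpha>_def \<beta>_def \<gamma>_def \<epsilon>_def)
  have \<gamma>\<alpha>: "\<gamma> \<le> \<alpha>"
  proof -
    have "(L - x)^2 \<le> (3*L + x)^2" by (rule power_mono) (use x1 x2 L in auto)
    then have "- ((3*L + x)^2) / (4 * s) \<le> - ((L - x)^2) / (4 * s)"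
      using s by (intro divide_right_mono) auto
    then show ?thesis by (simp add: \<gamma>_def \<alpha>_def)
  qed
  show ?thesis
  proof (cases "set_integrable lborel {-L..L} (\<lambda>y. (H_mixed L s x y)^2)")
    case False
    then have "(LINT y:{-L..L}|lborel. (H_mixed L s x y)^2) = 0"
      unfolding set_lebesgue_integral_def set_integrable_def by (rule not_integrable_integral_eq)
    then show ?thesis using K0 dphi0 by simp
  next
    case hi: True
    show ?thesis
    proof (cases "u \<ge> 2/5")
      case True
      define M1 where "M1 = Q * (\<alpha> + \<beta> + \<epsilon>)"
      have M10: "M1 \<ge> 0" using Q0 a0 by (simp add: M1_def)
      have HM: "\<bar>H_mixed L s x y\<bar> \<le> M1" if "y \<in> {-L..L}" for y
      proof -
        have "max \<alpha> (\<beta> + \<gamma> + \<epsilon>) \<le> \<alpha> + \<beta> + \<epsilon>" using \<gamma>\<alpha> a0 by simp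
        then have "Q * max \<alpha> (\<beta> + \<gamma> + \<epsilon>) \<le> Q * (\<alpha> + \<beta> + \<epsilon>)" using Q0 by simp
        then show ?thesis using Hs[OF that] by (simp add: M1_def)
      qed
      have ai: "set_integrable lborel {-L..L} (\<lambda>y. \<bar>H_mixed L s x y\<bar>)"
        by (rule set_integrable_absH[OF s L x1 x2 hi])
      have "(LINT y:{-L..L}|lborel. (H_mixed L s x y)^2) \<le> (LINT y:{-L..L}|lborel. M1 * \<bar>H_mixed L s x y\<bar>)"
      proof (rule set_integral_mono[OF hi])
        show "set_integrable lborel {-L..L} (\<lambda>y. M1 * \<bar>H_mixed L s x y\<bar>)"
          using ai by simp
        show "(H_mixed L s x y)^2 \<le> M1 * \<bar>H_mixed L s x y\<bar>" if "y \<in> {-L..L}" for y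
        proof -
          have "(H_mixed L s x y)^2 = \<bar>H_mixed L s x y\<bar> * \<bar>H_mixed L s x y\<bar>"
            by (simp add: power2_eq_square abs_mult_self_eq)
          also have "\<dots> \<le> M1 * \<bar>H_mixed L s x y\<bar>"
            by (rule mult_right_mono[OF HM[OF that]]) simp
          finally show ?thesis .
        qed
      qed
      also have "\<dots> = M1 * (LINT y:{-L..L}|lborel. \<bar>H_mixed L s x y\<bar>)"
        by simp
      also have "\<dots> \<le> M1 * (K_const s x L * (\<alpha> + \<beta>))"
        using part1[OF s L x1 x2] M10 by (intro mult_left_mono) (simp_all add: \<alpha>_def \<beta>_def)
      also have "\<dots> \<le> K_const s x L * dphi L x s"
      proof -
        have e4: "\<epsilon> \<le> exp (- 4 * u)"
        proof -
          have "(4*L)^2 \<le> (5*L - x)^2" by (rule power_mono) (use x2 L in auto)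
          then have "- ((5*L - x)^2) / (4 * s) \<le> - ((4*L)^2) / (4 * s)"
            using s by (intro divide_right_mono) auto
          also have "- ((4*L)^2) / (4 * s) = - 4 * u" using s by (simp add: u_def power2_eq_square field_simps)
          finally show ?thesis by (simp add: \<epsilon>_def)
        qed
        have ue: "u * exp (- u) \<le> 4 * s * Ed L x s"
        proof (cases "x \<le> 0")
          case True
          have q1: "u \<le> (L - x)^2 / s"
            unfolding u_def using s by (intro divide_right_mono power_mono) (use True L in auto)
          have q2: "exp (- u) \<le> \<alpha>"
          proof -
            have "(L - x)^2 \<le> (2*L)^2" by (rule power_mono) (use True x1 x2 in auto)
            then have "- u \<le> - ((L - x)^2) / (4 * s)"
              using s by (simp add: u_def power2_eq_square field_simps)
            then show ?thesis by (simp add: \<alpha>_def)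
          qed
          have "u * exp (- u) \<le> ((L - x)^2 / s) * \<alpha>"
            by (rule mult_mono[OF q1 q2]) (use u0 s in auto)
          moreover have "0 \<le> ((L + x)^2 / s) * \<beta>" using s a0 by simp
          ultimately show ?thesis unfolding Ed4 by linarith
        next
          case False
          have q1: "u \<le> (L + x)^2 / s"
            unfolding u_def using s by (intro divide_right_mono power_mono) (use False L in auto)
          have q2: "exp (- u) \<le> \<beta>"
          proof -
            have "(L + x)^2 \<le> (2*L)^2" by (rule power_mono) (use False x1 x2 in auto)
            then have "- u \<le> - ((L + x)^2) / (4 * s)"
              using s by (simp add: u_def power2_eq_square field_simps)
            then show ?thesis by (simp add: \<beta>_def)
          qed
          have "u * exp (- u) \<le> ((L + x)^2 / s) * \<beta>"
            by (rule mult_mono[OF q1 q2]) (use u0 s in auto)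
          moreover have "0 \<le> ((L - x)^2 / s) * \<alpha>" using s a0 by simp
          ultimately show ?thesis unfolding Ed4 by linarith
        qed
        have ee: "\<epsilon> \<le> 4 * s * Ed L x s" using e4 regime1_num[OF True] ue by linarith
        have "M1 * (\<alpha> + \<beta>) = Q * (\<alpha> + \<beta>)^2 + Q * (\<alpha> + \<beta>) * \<epsilon>"
          by (simp add: M1_def power2_eq_square algebra_simps)
        also have "\<dots> \<le> Q * (\<alpha> + \<beta>)^2 + Q * (\<alpha> + \<beta>) * (4 * s * Ed L x s)"
          using ee Q0 a0 by (intro add_left_mono mult_left_mono) auto
        finally have "M1 * (\<alpha> + \<beta>) \<le> dphi L x s" unfolding dphie .
        then have "K_const s x L * (M1 * (\<alpha> + \<beta>)) \<le> K_const s x L * dphi L x s"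
          using K0 by (intro mult_left_mono) auto
        then show ?thesis by (simp add: ac_simps)
      qed
      finally show ?thesis .
    next
      case False
      then have u1: "u \<le> 2/5" by simp
      have sL: "s \<ge> L^2"
      proof -
        have "L^2 / s \<le> 1" using u1 unfolding u_def by linarith
        then show ?thesis using s by (simp add: field_simps)
      qed
      have Kh: "K_const s x L = 1/2" by (rule K_half[OF sL L x1 x2])
      define m where "m = max \<alpha> (\<beta> + \<gamma> + \<epsilon>)"
      have m0: "m \<ge> 0" using a0 by (simp add: m_def le_max_iff_disj)
      have ci: "set_integrable lborel {-L..L} (\<lambda>y. (Q * m)^2)"
        by (rule borel_integrable_atLeastAtMost') (rule continuous_on_const)
      have "(LINT y:{-L..L}|lborel. (H_mixed L s x y)^2) \<le> (LINT y:{-L..L}|lborel. (Q * m)^2)"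
      proof (rule set_integral_mono[OF hi ci])
        show "(H_mixed L s x y)^2 \<le> (Q * m)^2" if "y \<in> {-L..L}" for y
        proof -
          have "\<bar>H_mixed L s x y\<bar> \<le> \<bar>Q * m\<bar>" using Hs[OF that] Q0 m0 by (simp add: m_def)
          then show ?thesis by (simp add: abs_le_square_iff)
        qed
      qed
      also have "\<dots> = 2 * L * (Q * m)^2" using L by (simp add: set_integral_const)
      also have "\<dots> \<le> 1/2 * dphi L x s"
      proof -
        define w where "w = exp (- 4 * u)"
        define p where "p = exp (- u)"
        define D where "D = 1 + w / (1 + p)"
        have w0: "w > 0" "p > 0" by (simp_all add: w_def p_def)
        have D1: "D \<ge> 1" using w0 by (simp add: D_def)
        have \<epsilon>w: "\<epsilon> \<le> \<alpha> * w"
        proof -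
          have "(L - x)^2 + 16 * L^2 \<le> (5*L - x)^2"
            using x2 L by (simp add: power2_eq_square algebra_simps)
          then have "- ((5*L - x)^2) / (4 * s) \<le> - ((L - x)^2 + 16 * L^2) / (4 * s)"
            using s by (intro divide_right_mono) auto
          also have "- ((L - x)^2 + 16 * L^2) / (4 * s) = - ((L - x)^2) / (4 * s) + - 4 * u"
            using s by (simp add: u_def field_simps)
          finally have "- ((5*L - x)^2) / (4 * s) \<le> - ((L - x)^2) / (4 * s) + - 4 * u" .
          then have "\<epsilon> \<le> exp (- ((L - x)^2) / (4 * s) + - 4 * u)" by (simp add: \<epsilon>_def)
          then show ?thesis by (simp add: mult_exp_exp \<alpha>_def w_def)
        qed
        have \<alpha>p: "\<alpha> * p \<le> \<beta>"
        proof -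
          have "(L + x)^2 \<le> (L - x)^2 + 4 * L^2"
            using x2 L by (simp add: power2_eq_square algebra_simps)
          then have "- ((L - x)^2 + 4 * L^2) / (4 * s) \<le> - ((L + x)^2) / (4 * s)"
            using s by (intro divide_right_mono) auto
          moreover have "- ((L - x)^2 + 4 * L^2) / (4 * s) = - ((L - x)^2) / (4 * s) + - u"
            using s by (simp add: u_def field_simps)
          ultimately have "- ((L - x)^2) / (4 * s) + - u \<le> - ((L + x)^2) / (4 * s)" by simp
          then have "exp (- ((L - x)^2) / (4 * s) + - u) \<le> \<beta>" by (simp add: \<beta>_def)
          then show ?thesis by (simp add: mult_exp_exp \<alpha>_def p_def)
        qed
        have mD: "m \<le> (\<alpha> + \<beta>) * D"
        proof -
          have "\<alpha> \<le> (\<alpha> + \<beta>) * D"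
          proof -
            have "\<alpha> \<le> (\<alpha> + \<beta>) * 1" using a0 by simp
            also have "\<dots> \<le> (\<alpha> + \<beta>) * D" using D1 a0 by (intro mult_left_mono) auto
            finally show ?thesis .
          qed
          moreover have "\<beta> + \<gamma> + \<epsilon> \<le> (\<alpha> + \<beta>) * D"
          proof -
            have "\<alpha> * w * (1 + p) \<le> (\<alpha> + \<beta>) * w"
            proof -
              have "\<alpha> * w * (1 + p) = \<alpha> * w + (\<alpha> * p) * w" by (simp add: algebra_simps)
              also have "\<dots> \<le> \<alpha> * w + \<beta> * w" using \<alpha>p w0 by (intro add_left_mono mult_right_mono) auto
              finally show ?thesis by (simp add: algebra_simps)
            qed
            then have "\<alpha> * w \<le> (\<alpha> + \<beta>) * (w / (1 + p))" using w0 by (simp add: field_simps)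
            then have "\<beta> + \<gamma> + \<epsilon> \<le> (\<alpha> + \<beta>) + (\<alpha> + \<beta>) * (w / (1 + p))" using \<gamma>\<alpha> \<epsilon>w by linarith
            then show ?thesis by (simp add: D_def algebra_simps)
          qed
          ultimately show ?thesis by (simp add: m_def)
        qed
        have LQ: "(4 * L * Q)^2 = 4 * u / pi"
          using s L by (simp add: Q_def heat_kernel_def u_def power_mult_distrib power_divide real_sqrt_pow2 field_simps)
        have r2: "4 * u * D^4 \<le> 3" unfolding D_def w_def p_def by (rule regime2_num) (use u0 u1 in auto)
        have LQD: "4 * L * Q * D^2 \<le> 1"
        proof -
          have "(4 * L * Q * D^2)^2 = (4 * L * Q)^2 * D^4"
            by (simp add: power_mult_distrib power_mult[symmetric])
          also have "\<dots> = (4 * u / pi) * D^4" by (simp only: LQ)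
          also have "\<dots> = (4 * u * D^4) / pi" by simp
          finally have "(4 * L * Q * D^2)^2 = (4 * u * D^4) / pi" .
          also have "\<dots> \<le> 3 / pi" using r2 by (simp add: divide_right_mono)
          also have "\<dots> \<le> 1" using pi_gt3 by simp
          finally have "(4 * L * Q * D^2)^2 \<le> 1^2" by simp
          then show ?thesis by (rule power2_le_imp_le) simp
        qed
        have "m^2 \<le> ((\<alpha> + \<beta>) * D)^2" by (rule power_mono[OF mD m0])
        then have "4 * L * Q * m^2 \<le> 4 * L * Q * ((\<alpha> + \<beta>) * D)^2"
          using L Q0 by (intro mult_left_mono) auto
        also have "\<dots> = (4 * L * Q * D^2) * (\<alpha> + \<beta>)^2" by (simp add: power_mult_distrib)
        also have "\<dots> \<le> 1 * (\<alpha> + \<beta>)^2" by (rule mult_right_mono[OF LQD]) simp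
        finally have main: "4 * L * Q * m^2 \<le> (\<alpha> + \<beta>)^2" by simp
        have "2 * L * (Q * m)^2 = (Q / 2) * (4 * L * Q * m^2)" by (simp add: power2_eq_square)
        also have "\<dots> \<le> (Q / 2) * (\<alpha> + \<beta>)^2" using main Q0 by (intro mult_left_mono) auto
        also have "\<dots> \<le> 1/2 * dphi L x s"
        proof -
          have "0 \<le> Q * (\<alpha> + \<beta>) * (4 * s * Ed L x s)"
            using Q0 a0 s Ed_nonneg[of s L x] by (intro mult_nonneg_nonneg) auto
          then show ?thesis unfolding dphie by simp
        qed
        finally show ?thesis .
      qed
      finally show ?thesis by (simp add: Kh)
    qed
  qed
qed


definition phi :: "real \<Rightarrow> real \<Rightarrow> real \<Rightarrow> real" where
  "phi L x s = sqrt (s / pi) * (Ef L x s)^2"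

lemma d_exp:
  assumes s: "s > 0"
  shows "((\<lambda>s. exp (- c / (4 * s))) has_real_derivative (c / (4 * s^2)) * exp (- c / (4 * s))) (at s)"
  using s by (auto intro!: derivative_eq_intros simp: power2_eq_square field_simps)

lemma d_Ef: "s > 0 \<Longrightarrow> (Ef L x has_real_derivative Ed L x s) (at s)"
proof -
  assume s: "s > 0"
  have e: "Ef L x = (\<lambda>s. exp (- ((L - x)^2) / (4 * s)) + exp (- ((L + x)^2) / (4 * s)))"
    by (rule ext) (simp add: Ef_def)
  show ?thesis unfolding e Ed_def
    by (intro DERIV_add d_exp[OF s])
qed

lemma d_sqrt:
  assumes s: "s > 0"
  shows "((\<lambda>s. sqrt (s / pi)) has_real_derivative 1 / (2 * sqrt (pi * s))) (at s)"
proof -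
  have e: "sqrt (s / pi) * pi = sqrt (pi * s)"
  proof -
    have "sqrt (s / pi) * pi = sqrt s / sqrt pi * (sqrt pi * sqrt pi)" by (simp add: real_sqrt_divide)
    also have "\<dots> = sqrt s * sqrt pi" by (simp add: field_simps)
    also have "\<dots> = sqrt (pi * s)" by (simp add: real_sqrt_mult)
    finally show ?thesis .
  qed
  show ?thesis
    using s e by (auto intro!: derivative_eq_intros simp: field_simps)
qed

lemma d_phi: "s > 0 \<Longrightarrow> (phi L x has_real_derivative dphi L x s) (at s)"
proof -
  assume s: "s > 0"
  have e: "phi L x = (\<lambda>s. sqrt (s / pi) * (Ef L x s)^2)" by (rule ext) (simp add: phi_def)
  have "(phi L x has_real_derivative
      (1 / (2 * sqrt (pi * s))) * (Ef L x s)^2 + (of_nat 2 * (Ed L x s * Ef L x s ^ (2 - Suc 0))) * sqrt (s / pi)) (at s)"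
    unfolding e by (intro DERIV_mult d_sqrt[OF s] DERIV_power d_Ef[OF s])
  then show ?thesis by (rule DERIV_cong) (simp add: dphi_def algebra_simps)
qed

lemma dphi_cont: "s > 0 \<Longrightarrow> isCont (dphi L x) s"
proof -
  assume s: "s > 0"
  have e: "dphi L x = (\<lambda>s. (1 / (2 * sqrt (pi * s))) * (exp (- ((L - x)^2) / (4 * s)) + exp (- ((L + x)^2) / (4 * s)))^2
     + 2 * sqrt (s / pi) * (exp (- ((L - x)^2) / (4 * s)) + exp (- ((L + x)^2) / (4 * s)))
       * (((L - x)^2 / (4 * s^2)) * exp (- ((L - x)^2) / (4 * s)) + ((L + x)^2 / (4 * s^2)) * exp (- ((L + x)^2) / (4 * s))))"
    by (rule ext) (simp add: dphi_def Ef_def Ed_def)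
  show ?thesis unfolding e by (intro continuous_intros) (use s in auto)
qed

lemma phi_cont: "s > 0 \<Longrightarrow> isCont (phi L x) s"
  using d_phi DERIV_isCont by blast

lemma Ef_le2: "s > 0 \<Longrightarrow> Ef L x s \<le> 2"
proof -
  assume s: "s > 0"
  have "exp (- ((L - x)^2) / (4 * s)) \<le> 1" "exp (- ((L + x)^2) / (4 * s)) \<le> 1"
    using s by (simp_all add: divide_nonneg_pos)
  then show ?thesis unfolding Ef_def by linarith
qed

lemma phi_lim0: "(phi L x \<longlongrightarrow> 0) (at_right 0)"
proof (rule Lim_null_comparison)
  show "\<forall>\<^sub>F s in at_right 0. norm (phi L x s) \<le> 4 * sqrt (s / pi)"
  proof (rule eventually_mono[OF eventually_at_right_less])
    fix s :: real assume s: "0 < s"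
    have "(Ef L x s)^2 \<le> 2^2" by (rule power_mono[OF Ef_le2[OF s] Ef_nonneg])
    then have "sqrt (s / pi) * (Ef L x s)^2 \<le> sqrt (s / pi) * 4"
      using s by (intro mult_left_mono) auto
    then show "norm (phi L x s) \<le> 4 * sqrt (s / pi)"
      using s by (simp add: phi_def)
  qed
  have "((\<lambda>s. 4 * sqrt (s / pi)) \<longlongrightarrow> 4 * sqrt (0 / pi)) (at_right (0::real))"
    by (intro tendsto_intros) auto
  then show "((\<lambda>s. 4 * sqrt (s / pi)) \<longlongrightarrow> 0) (at_right 0)" by simp
qed

lemma dphi_integral:
  assumes t: "t > 0"
  shows "set_integrable lborel {0<..<t} (dphi L x)"
    and "(LINT s:{0<..<t}|lborel. dphi L x s) = phi L x t"
proof -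
  have lim0: "((phi L x \<circ> real_of_ereal) \<longlongrightarrow> 0) (at_right (ereal 0))"
    unfolding ereal_tendsto_simps by (rule phi_lim0)
  have limt: "((phi L x \<circ> real_of_ereal) \<longlongrightarrow> phi L x t) (at_left (ereal t))"
    unfolding ereal_tendsto_simps
    using phi_cont[OF t] by (intro tendsto_mono[OF at_le[of "{..<t}" UNIV]]) (auto simp: isCont_def)
  note ftc = interval_integral_FTC_nonneg[where a="ereal 0" and b="ereal t" and F="phi L x" and f="dphi L x"
      and A=0 and B="phi L x t"]
  have c1: "ereal 0 < ereal t" using t by simp
  have c2: "\<And>s. ereal 0 < ereal s \<Longrightarrow> ereal s < ereal t \<Longrightarrow> (phi L x has_real_derivative dphi L x s) (at s)"
    by (rule d_phi) simp
  have c3: "\<And>s. ereal 0 < ereal s \<Longrightarrow> ereal s < ereal t \<Longrightarrow> isCont (dphi L x) s"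
    by (rule dphi_cont) simp
  have c4: "AE s in lborel. ereal 0 < ereal s \<longrightarrow> ereal s < ereal t \<longrightarrow> 0 \<le> dphi L x s"
    by (rule AE_I2) (auto intro: dphi_nonneg)
  note r = ftc[OF c1 c2 c3 c4 lim0 limt]
  show "set_integrable lborel {0<..<t} (dphi L x)" using r(1) by simp
  show "(LINT s:{0<..<t}|lborel. dphi L x s) = phi L x t"
    using r(2) c1 by (simp add: interval_lebesgue_integral_def)
qed


lemma part3:
  assumes L: "L > 0" and t: "t > 0" and x1: "-L \<le> x" and x2: "x \<le> L"
  shows "(LINT s:{0..t}|lborel. (LINT y:{-L..L}|lborel. (H_mixed L s x y)^2))
           \<le> sqrt (t / pi) * K_const t x L * (Ef L x t)^2"
proof -
  let ?F = "\<lambda>s. (LINT y:{-L..L}|lborel. (H_mixed L s x y)^2)"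
  have K0: "K_const t x L \<ge> 0" by (rule K_nonneg) (use t x1 x2 in auto)
  have R0: "sqrt (t / pi) * K_const t x L * (Ef L x t)^2 \<ge> 0" using t K0 by simp
  show ?thesis
  proof (cases "set_integrable lborel {0..t} ?F")
    case True
    have eqI: "(LINT s:{0..t}|lborel. ?F s) = (LINT s:{0<..<t}|lborel. ?F s)"
      using interval_integral_Icc[of 0 t ?F] t by (simp add: interval_lebesgue_integral_def)
    have si: "set_integrable lborel {0<..<t} ?F"
      by (rule set_integrable_subset[OF True]) auto
    have di: "set_integrable lborel {0<..<t} (\<lambda>s. K_const t x L * dphi L x s)"
      using dphi_integral(1)[OF t, of L x] by simp
    have "(LINT s:{0<..<t}|lborel. ?F s) \<le> (LINT s:{0<..<t}|lborel. K_const t x L * dphi L x s)"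
    proof (rule set_integral_mono[OF si di])
      fix s assume s: "s \<in> {0<..<t}"
      then have s0: "s > 0" by simp
      have "?F s \<le> K_const s x L * dphi L x s" by (rule C3[OF s0 L x1 x2])
      also have "\<dots> \<le> K_const t x L * dphi L x s"
        by (intro mult_right_mono K_mono dphi_nonneg) (use s x1 x2 in auto)
      finally show "?F s \<le> K_const t x L * dphi L x s" .
    qed
    also have "\<dots> = K_const t x L * phi L x t"
      using dphi_integral(2)[OF t, of L x] by simp
    also have "\<dots> = sqrt (t / pi) * K_const t x L * (Ef L x t)^2"
      by (simp add: phi_def)
    finally show ?thesis using eqI by simp
  next
    case False
    then have "(LINT s:{0..t}|lborel. ?F s) = 0"
      unfolding set_lebesgue_integral_def set_integrable_def by (rule not_integrable_integral_eq)
    then show ?thesis using R0 by simp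
  qed
qed

theorem lemma5p3:
  fixes T L t x :: real
  assumes "T > 0" and "L > 0" and "0 < t" and "t \<le> T"
    and "-L \<le> x" and "x \<le> L"
  defines "E \<equiv> exp (- ((L - x)^2) / (4 * t)) + exp (- ((L + x)^2) / (4 * t))"
  shows "(LINT y:{-L..L}|lborel. \<bar>H_mixed L t x y\<bar>) \<le> K_const t x L * E \<and>
         (LINT s:{0..t}|lborel. (LINT y:{-L..L}|lborel. \<bar>H_mixed L s x y\<bar>))
           \<le> t * K_const t x L * E \<and>
         (LINT s:{0..t}|lborel. (LINT y:{-L..L}|lborel. (H_mixed L s x y)^2))
           \<le> sqrt (t / pi) * K_const t x L * E^2"
proof -
  have EE: "E = Ef L x t" by (simp add: E_def Ef_def)
  show ?thesis
    unfolding EE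
    using part1[OF assms(3) assms(2) assms(5) assms(6)] part2[OF assms(2) assms(3) assms(5) assms(6)]
      part3[OF assms(2) assms(3) assms(5) assms(6)]
    by (simp add: Ef_def)
qed


end
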